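(* For every integer $d\ge 1$ there is a finite graph which is not a $d$-sphere graph; equivalently, there is a finite graph of sphere dimension greater than $d$.
   Context: Let $\mathbb{D}^d=\{x\in\mathbb{R}^{d+1}: |x|\le 1\}$ and $\mathcal{H}_d=\{\mathbb{D}^d\cap H: H \text{ a hyperplane of } \mathbb{R}^{d+1}\text{ meeting the interior of }\mathbb{D}^d\}$. A $d$-sphere graph is an intersection graph of a subfamily of $\mathcal{H}_d$. For $d\ge 2$ these are exactly the intersection graphs of families of spheres in $\mathbb{R}^d$; for $d=1$ they are the circle graphs. The sphere dimension of a graph is the least $d$ such that it is a $d$-sphere graph. *)

theory Defs
  imports "HOL-Analysis.Analysis"
begin

text \<open>The family H_d: intersections of the closed unit ball of the ambient
Euclidean space (of dimension d+1) with a hyperplane a.x = b (a nonzero)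
that meets the open unit ball.\<close>
definition hyperplane_sections :: "'a::euclidean_space set set" where
  "hyperplane_sections =
     {cball 0 1 \<inter> {x. a \<bullet> x = b} | a b.
        a \<noteq> 0 \<and> {x. a \<bullet> x = b} \<inter> ball 0 1 \<noteq> {}}"

definition is_sphere_graph :: "'a::euclidean_space itself \<Rightarrow> 'v set \<Rightarrow> ('v \<Rightarrow> 'v \<Rightarrow> bool) \<Rightarrow> bool" where
  "is_sphere_graph _ V E \<longleftrightarrow>
     (\<exists>f :: 'v \<Rightarrow> 'a set. inj_on f V \<and> f ` V \<subseteq> hyperplane_sections \<and>
        (\<forall>u\<in>V. \<forall>v\<in>V. u \<noteq> v \<longrightarrow> (E u v \<longleftrightarrow> f u \<inter> f v \<noteq> {})))"

end

theory Submission imports Defs "HOL-Library.Function_Algebras" "HOL-Library.Nat_Bijection" begin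

lemma ab_sol:
  fixes c b1 b2 :: real
  assumes d: "1 - c^2 \<noteq> 0"
  shows "(b1 - c*b2)/(1-c^2) + (b2 - c*b1)/(1-c^2) * c = b1"
    and "(b1 - c*b2)/(1-c^2) * c + (b2 - c*b1)/(1-c^2) = b2"
proof -
  have "(b1 - c*b2)/(1-c^2) + (b2 - c*b1)/(1-c^2) * c = ((b1 - c*b2) + (b2 - c*b1)*c)/(1-c^2)"
    by (simp add: add_divide_distrib)
  also have "\<dots> = (b1*(1-c^2))/(1-c^2)" by (simp add: algebra_simps power2_eq_square)
  also have "\<dots> = b1" using d by simp
  finally show "(b1 - c*b2)/(1-c^2) + (b2 - c*b1)/(1-c^2) * c = b1" .
  have "(b1 - c*b2)/(1-c^2) * c + (b2 - c*b1)/(1-c^2) = ((b1 - c*b2)*c + (b2 - c*b1))/(1-c^2)"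
    by (simp add: add_divide_distrib)
  also have "\<dots> = (b2*(1-c^2))/(1-c^2)" by (simp add: algebra_simps power2_eq_square)
  also have "\<dots> = b2" using d by simp
  finally show "(b1 - c*b2)/(1-c^2) * c + (b2 - c*b1)/(1-c^2) = b2" .
qed

lemma ab_sq:
  fixes c b1 b2 :: real
  shows "(b1 - c*b2)/(1-c^2) * b1 + (b2 - c*b1)/(1-c^2) * b2 = (b1^2 + b2^2 - 2*c*b1*b2)/(1-c^2)"
proof -
  have "(b1 - c*b2)/(1-c^2) * b1 + (b2 - c*b1)/(1-c^2) * b2 = ((b1 - c*b2) * b1 + (b2 - c*b1) * b2)/(1-c^2)"
    by (simp add: add_divide_distrib)
  also have "(b1 - c*b2) * b1 + (b2 - c*b1) * b2 = b1^2 + b2^2 - 2*c*b1*b2" by (simp add: algebra_simps power2_eq_square)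
  finally show ?thesis .
qed

lemma key:
  fixes a1 a2 :: "'a::euclidean_space"
  assumes n1: "norm a1 = 1" and n2: "norm a2 = 1" and bb1: "\<bar>b1\<bar> \<le> 1"
  shows "(\<exists>x. norm x \<le> 1 \<and> a1 \<bullet> x = b1 \<and> a2 \<bullet> x = b2) \<longleftrightarrow>
         (a1 \<bullet> a2)^2 - 2*b1*b2*(a1 \<bullet> a2) + b1^2 + b2^2 \<le> 1"
proof -
  define c where "c = a1 \<bullet> a2"
  have i1: "a1 \<bullet> a1 = 1" using n1 by (simp add: dot_square_norm)
  have i2: "a2 \<bullet> a2 = 1" using n2 by (simp add: dot_square_norm)
  have i21: "a2 \<bullet> a1 = c" by (simp add: c_def inner_commute)
  have cle: "c^2 \<le> 1"
  proof -
    have "\<bar>c\<bar> \<le> norm a1 * norm a2" unfolding c_def by (rule Cauchy_Schwarz_ineq2)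
    hence "\<bar>c\<bar> \<le> 1" using n1 n2 by simp
    thus ?thesis by (simp add: abs_le_square_iff power2_eq_square) (metis abs_le_square_iff abs_one one_power2 power2_eq_square)
  qed
  show ?thesis unfolding c_def[symmetric]
  proof
    assume "\<exists>x. norm x \<le> 1 \<and> a1 \<bullet> x = b1 \<and> a2 \<bullet> x = b2"
    then obtain x where x: "norm x \<le> 1" "a1 \<bullet> x = b1" "a2 \<bullet> x = b2" by blast
    have xx: "x \<bullet> x \<le> 1" using x(1) by (simp add: dot_square_norm power_le_one)
    have gen: "0 \<le> x \<bullet> x - 2*\<alpha>*b1 - 2*\<beta>*b2 + \<alpha>^2 + \<beta>^2 + 2*\<alpha>*\<beta>*c" for \<alpha> \<beta>
    proof -
      have "0 \<le> (x - \<alpha> *\<^sub>R a1 - \<beta> *\<^sub>R a2) \<bullet> (x - \<alpha> *\<^sub>R a1 - \<beta> *\<^sub>R a2)" by simp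
      also have "\<dots> = x \<bullet> x - 2*\<alpha>*b1 - 2*\<beta>*b2 + \<alpha>^2 + \<beta>^2 + 2*\<alpha>*\<beta>*c"
        using x i1 i2 i21 by (simp add: inner_diff_left inner_diff_right inner_commute c_def power2_eq_square algebra_simps)
      finally show ?thesis .
    qed
    show "c^2 - 2*b1*b2*c + b1^2 + b2^2 \<le> 1"
    proof (cases "c^2 = 1")
      case False
      hence d: "1 - c^2 > 0" using cle by simp
      define \<alpha> where "\<alpha> = (b1 - c*b2)/(1-c^2)"
      define \<beta> where "\<beta> = (b2 - c*b1)/(1-c^2)"
      have "0 \<le> x \<bullet> x - 2*\<alpha>*b1 - 2*\<beta>*b2 + \<alpha>^2 + \<beta>^2 + 2*\<alpha>*\<beta>*c" by (rule gen)
      also have "\<dots> = x \<bullet> x - (b1^2 + b2^2 - 2*c*b1*b2)/(1-c^2)"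
      proof -
        have s1: "\<alpha> + \<beta> * c = b1" unfolding \<alpha>_def \<beta>_def by (rule ab_sol(1)) (use d in simp)
        have s2: "\<alpha> * c + \<beta> = b2" unfolding \<alpha>_def \<beta>_def by (rule ab_sol(2)) (use d in simp)
        have "\<alpha>^2 + \<beta>^2 + 2*\<alpha>*\<beta>*c = \<alpha> * (\<alpha> + \<beta> * c) + \<beta> * (\<alpha> * c + \<beta>)" by (simp add: power2_eq_square algebra_simps)
        also have "\<dots> = \<alpha> * b1 + \<beta> * b2" using s1 s2 by simp
        finally have q: "\<alpha>^2 + \<beta>^2 + 2*\<alpha>*\<beta>*c = \<alpha> * b1 + \<beta> * b2" .
        have r: "\<alpha> * b1 + \<beta> * b2 = (b1^2 + b2^2 - 2*c*b1*b2)/(1-c^2)"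
          unfolding \<alpha>_def \<beta>_def by (rule ab_sq)
        show ?thesis using q r by simp
      qed
      finally have "(b1^2 + b2^2 - 2*c*b1*b2)/(1-c^2) \<le> 1" using xx by simp
      hence "b1^2 + b2^2 - 2*c*b1*b2 \<le> 1 - c^2" using d by (simp add: divide_le_eq)
      thus ?thesis by (simp add: algebra_simps)
    next
      case True
      have "(a1 - c *\<^sub>R a2) \<bullet> (a1 - c *\<^sub>R a2) = 1 - c^2"
        using i1 i2 i21 by (simp add: inner_diff_left inner_diff_right inner_commute c_def power2_eq_square algebra_simps)
      hence "a1 = c *\<^sub>R a2" using True by simp
      hence "b1 = c * b2" using x by simp
      thus ?thesis using True by (simp add: power2_eq_square algebra_simps)
    qed
  next
    assume H: "c^2 - 2*b1*b2*c + b1^2 + b2^2 \<le> 1"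
    show "\<exists>x. norm x \<le> 1 \<and> a1 \<bullet> x = b1 \<and> a2 \<bullet> x = b2"
    proof (cases "c^2 = 1")
      case False
      hence d: "1 - c^2 > 0" using cle by simp
      define \<alpha> where "\<alpha> = (b1 - c*b2)/(1-c^2)"
      define \<beta> where "\<beta> = (b2 - c*b1)/(1-c^2)"
      define x where "x = \<alpha> *\<^sub>R a1 + \<beta> *\<^sub>R a2"
      have e1: "a1 \<bullet> x = \<alpha> + \<beta> * c" unfolding x_def using i1 i21 by (simp add: inner_add_right c_def)
      have e2: "a2 \<bullet> x = \<alpha> * c + \<beta>" unfolding x_def using i2 i21 by (simp add: inner_add_right)
      have s1: "\<alpha> + \<beta> * c = b1" unfolding \<alpha>_def \<beta>_def by (rule ab_sol(1)) (use d in simp)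
      moreover have s2: "\<alpha> * c + \<beta> = b2" unfolding \<alpha>_def \<beta>_def by (rule ab_sol(2)) (use d in simp)
      moreover have "x \<bullet> x \<le> 1"
      proof -
        have "x \<bullet> x = \<alpha>^2 + \<beta>^2 + 2*\<alpha>*\<beta>*c" unfolding x_def using i1 i2 i21
          by (simp add: inner_add_left inner_add_right c_def power2_eq_square algebra_simps)
        also have "\<dots> = \<alpha> * (\<alpha> + \<beta> * c) + \<beta> * (\<alpha> * c + \<beta>)" by (simp add: power2_eq_square algebra_simps)
        also have "\<dots> = \<alpha> * b1 + \<beta> * b2" using s1 s2 by simp
        also have "\<dots> = (b1^2 + b2^2 - 2*c*b1*b2)/(1-c^2)"
          unfolding \<alpha>_def \<beta>_def by (rule ab_sq)
        also have "\<dots> \<le> 1" using d H by (simp add: divide_le_eq algebra_simps)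
        finally show ?thesis .
      qed
      hence "norm x \<le> 1" by (simp add: norm_eq_sqrt_inner)
      ultimately show ?thesis using e1 e2 by auto
    next
      case True
      have "(b1 - c*b2)^2 = b1^2 - 2*b1*b2*c + c^2*b2^2"
        by (simp add: power2_eq_square algebra_simps)
      hence "(b1 - c*b2)^2 = c^2 - 2*b1*b2*c + b1^2 + b2^2 - 1" using True by simp
      hence "(b1 - c*b2)^2 \<le> 0" using H True by simp
      hence b: "b1 = c*b2" by simp
      have "\<bar>b1\<bar> \<le> 1" by (rule bb1)
      moreover have "a1 \<bullet> (b1 *\<^sub>R a1) = b1" using i1 by simp
      moreover have "a2 \<bullet> (b1 *\<^sub>R a1) = b2" using i21 b True by (simp add: power2_eq_square)
      ultimately show ?thesis using n1 by (intro exI[of _ "b1 *\<^sub>R a1"]) simp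
    qed
  qed
qed

definition fscale :: "real \<Rightarrow> ('p \<Rightarrow> real) \<Rightarrow> ('p \<Rightarrow> real)" where
  "fscale r f = (\<lambda>x. r * f x)"

interpretation fv: vector_space "fscale :: real \<Rightarrow> ('p \<Rightarrow> real) \<Rightarrow> _"
  by unfold_locales (auto simp: fscale_def fun_eq_iff algebra_simps)

lemma sum_fun_apply: "(\<Sum>v\<in>A. g v) x = (\<Sum>v\<in>A. g v x)" for g :: "'b \<Rightarrow> 'p \<Rightarrow> real"
  by (induction A rule: infinite_finite_induct) auto

lemma dep_exists:
  fixes \<psi> :: "'v \<Rightarrow> 'p \<Rightarrow> real"
  assumes "finite A" "finite W" "card W < card A" "\<psi> ` A \<subseteq> fv.span W"
  shows "\<exists>l. (\<exists>v\<in>A. l v \<noteq> 0) \<and> (\<forall>x. (\<Sum>v\<in>A. l v * \<psi> v x) = 0)"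
proof (cases "inj_on \<psi> A")
  case True
  have "fv.dependent (\<psi> ` A)"
  proof (rule ccontr)
    assume "\<not> fv.dependent (\<psi> ` A)"
    from fv.independent_span_bound[OF assms(2) this assms(4)]
    have "card (\<psi> ` A) \<le> card W" by blast
    with card_image[OF True] assms(3) show False by simp
  qed
  then obtain u where u: "\<exists>w\<in>\<psi> ` A. u w \<noteq> 0" "(\<Sum>w\<in>\<psi> ` A. fscale (u w) w) = 0"
    using fv.dependent_finite[of "\<psi> ` A"] assms(1) by auto
  have "(\<Sum>v\<in>A. fscale (u (\<psi> v)) (\<psi> v)) = 0"
    using u(2) sum.reindex[OF True, of "\<lambda>w. fscale (u w) w"] by (simp add: o_def)
  hence "\<forall>x. (\<Sum>v\<in>A. u (\<psi> v) * \<psi> v x) = 0"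
    by (simp add: fun_eq_iff sum_fun_apply fscale_def)
  moreover have "\<exists>v\<in>A. u (\<psi> v) \<noteq> 0" using u(1) by (auto simp only: bex_simps image_iff)
  ultimately show ?thesis by (intro exI[of _ "\<lambda>v. u (\<psi> v)"] conjI) assumption
next
  case False
  then obtain a b where ab: "a \<in> A" "b \<in> A" "a \<noteq> b" "\<psi> a = \<psi> b" unfolding inj_on_def by blast
  define l where "l v = (if v = a then 1 else if v = b then -1 else (0::real))" for v
  have "(\<Sum>v\<in>A. l v * \<psi> v x) = l a * \<psi> a x + l b * \<psi> b x" for x
  proof -
    have "(\<Sum>v\<in>A. l v * \<psi> v x) = (\<Sum>v\<in>{a,b}. l v * \<psi> v x)"
      by (rule sum.mono_neutral_right) (use assms(1) ab in \<open>auto simp: l_def\<close>)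
    then show ?thesis using ab by simp
  qed
  then show ?thesis using ab by (intro exI[of _ l]) (auto simp: l_def)
qed


lemma normalize_section:
  fixes S :: "'a::euclidean_space set"
  assumes "S \<in> hyperplane_sections"
  shows "\<exists>a b. norm a = 1 \<and> \<bar>b\<bar> < 1 \<and> S = cball 0 1 \<inter> {x. a \<bullet> x = b}"
proof -
  obtain a b where ab: "S = cball 0 1 \<inter> {x. a \<bullet> x = b}" "a \<noteq> 0" "{x. a \<bullet> x = b} \<inter> ball 0 1 \<noteq> {}"
    using assms unfolding hyperplane_sections_def by blast
  then obtain y where y: "a \<bullet> y = b" "norm y < 1" by (force simp: dist_norm)
  define a' where "a' = (1 / norm a) *\<^sub>R a"
  define b' where "b' = b / norm a"
  have na: "norm a > 0" using ab(2) by simp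
  have "norm a' = 1" unfolding a'_def using na by simp
  moreover have eq: "a' \<bullet> x = b' \<longleftrightarrow> a \<bullet> x = b" for x
    unfolding a'_def b'_def using na by (auto simp: field_simps)
  moreover have "\<bar>b'\<bar> < 1"
  proof -
    have "b' = a' \<bullet> y" using eq[of y] y(1) by simp
    hence "\<bar>b'\<bar> \<le> norm a' * norm y" using Cauchy_Schwarz_ineq2 by metis
    also have "\<dots> < 1" using `norm a' = 1` y(2) by simp
    finally show ?thesis .
  qed
  moreover have "S = cball 0 1 \<inter> {x. a' \<bullet> x = b'}" using ab(1) eq by auto
  ultimately show ?thesis by blast
qed

definition psi :: "'a::euclidean_space \<Rightarrow> real \<Rightarrow> ('a \<times> real \<times> real) \<Rightarrow> real" where
  "psi a b p = (a \<bullet> fst p)^2 - 2 * fst (snd p) * b * (a \<bullet> fst p) + b^2 + snd (snd p)"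

definition Wset :: "('a::euclidean_space \<times> real \<times> real \<Rightarrow> real) set" where
  "Wset = (\<lambda>(i,j). \<lambda>p. (fst p \<bullet> i) * (fst p \<bullet> j)) ` (Basis \<times> Basis)
        \<union> (\<lambda>i. \<lambda>p. fst (snd p) * (fst p \<bullet> i)) ` Basis \<union> {\<lambda>p. 1, \<lambda>p. snd (snd p)}"

lemma Wset_finite: "finite (Wset :: ('a::euclidean_space \<times> real \<times> real \<Rightarrow> real) set)"
  unfolding Wset_def by auto

lemma Wset_card: "card (Wset :: ('a::euclidean_space \<times> real \<times> real \<Rightarrow> real) set) \<le> DIM('a) * DIM('a) + DIM('a) + 2"
proof -
  let ?Q = "(\<lambda>(i,j). \<lambda>p::'a \<times> real \<times> real. (fst p \<bullet> i) * (fst p \<bullet> j)) ` (Basis \<times> Basis)"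
  let ?L = "(\<lambda>i. \<lambda>p::'a \<times> real \<times> real. fst (snd p) * (fst p \<bullet> i)) ` Basis"
  let ?C = "{\<lambda>p::'a \<times> real \<times> real. 1::real, \<lambda>p. snd (snd p)}"
  have "card (?Q \<union> ?L \<union> ?C) \<le> card (?Q \<union> ?L) + card ?C" by (rule card_Un_le)
  also have "card (?Q \<union> ?L) \<le> card ?Q + card ?L" by (rule card_Un_le)
  also have "card ?Q \<le> card ((Basis::'a set) \<times> (Basis::'a set))" by (rule card_image_le) simp
  also have "card ?L \<le> card (Basis::'a set)" by (rule card_image_le) simp
  also have "card ?C \<le> 2" by (rule card_insert_le_m1) auto
  finally show ?thesis unfolding Wset_def by (simp add: card_cartesian_product)
qed

lemma psi_span: "psi a b \<in> fv.span (Wset :: ('a::euclidean_space \<times> real \<times> real \<Rightarrow> real) set)"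
proof -
  let ?Q = "\<lambda>ij. \<lambda>p::'a \<times> real \<times> real. (fst p \<bullet> fst ij) * (fst p \<bullet> snd ij)"
  let ?L = "\<lambda>i. \<lambda>p::'a \<times> real \<times> real. fst (snd p) * (fst p \<bullet> i)"
  have eq: "psi a b = (\<Sum>ij\<in>Basis \<times> Basis. fscale ((a \<bullet> fst ij) * (a \<bullet> snd ij)) (?Q ij))
     + (\<Sum>i\<in>Basis. fscale (-2 * b * (a \<bullet> i)) (?L i)) + fscale (b^2) (\<lambda>p. 1) + fscale 1 (\<lambda>p. snd (snd p))"
  proof (rule ext)
    fix p :: "'a \<times> real \<times> real"
    obtain x t s where p: "p = (x,t,s)" by (cases p) auto
    have lin: "a \<bullet> x = (\<Sum>i\<in>Basis. (a \<bullet> i) * (x \<bullet> i))" by (rule euclidean_inner)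
    have "(a \<bullet> x)^2 = (\<Sum>i\<in>Basis. (a \<bullet> i) * (x \<bullet> i)) * (\<Sum>j\<in>Basis. (a \<bullet> j) * (x \<bullet> j))"
      using lin by (simp add: power2_eq_square)
    also have "\<dots> = (\<Sum>i\<in>Basis. \<Sum>j\<in>Basis. ((a \<bullet> i) * (x \<bullet> i)) * ((a \<bullet> j) * (x \<bullet> j)))"
      by (rule sum_product)
    also have "\<dots> = (\<Sum>ij\<in>Basis \<times> Basis. ((a \<bullet> fst ij) * (x \<bullet> fst ij)) * ((a \<bullet> snd ij) * (x \<bullet> snd ij)))"
      by (simp add: sum.cartesian_product case_prod_beta)
    also have "\<dots> = (\<Sum>ij\<in>Basis \<times> Basis. ((a \<bullet> fst ij) * (a \<bullet> snd ij)) * ((x \<bullet> fst ij) * (x \<bullet> snd ij)))"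
      by (rule sum.cong) (simp_all only: mult_ac)
    finally have sq: "(a \<bullet> x)^2 = \<dots>" .
    have l2: "2 * t * b * (a \<bullet> x) = (\<Sum>i\<in>Basis. (2 * b * (a \<bullet> i)) * (t * (x \<bullet> i)))"
    proof -
      have "2 * t * b * (a \<bullet> x) = (2 * t * b) * (\<Sum>i\<in>Basis. (a \<bullet> i) * (x \<bullet> i))" using lin by simp
      also have "\<dots> = (\<Sum>i\<in>Basis. (2 * t * b) * ((a \<bullet> i) * (x \<bullet> i)))" by (rule sum_distrib_left)
      also have "\<dots> = (\<Sum>i\<in>Basis. (2 * b * (a \<bullet> i)) * (t * (x \<bullet> i)))" by (rule sum.cong) (simp_all only: mult_ac)
      finally show ?thesis .
    qed
    show "psi a b p = ((\<Sum>ij\<in>Basis \<times> Basis. fscale ((a \<bullet> fst ij) * (a \<bullet> snd ij)) (?Q ij))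
     + (\<Sum>i\<in>Basis. fscale (-2 * b * (a \<bullet> i)) (?L i)) + fscale (b^2) (\<lambda>p. 1) + fscale 1 (\<lambda>p. snd (snd p))) p"
    proof -
      have R: "((\<Sum>ij\<in>Basis \<times> Basis. fscale ((a \<bullet> fst ij) * (a \<bullet> snd ij)) (?Q ij))
     + (\<Sum>i\<in>Basis. fscale (-2 * b * (a \<bullet> i)) (?L i)) + fscale (b^2) (\<lambda>p. 1) + fscale 1 (\<lambda>p. snd (snd p))) (x,t,s)
        = (\<Sum>ij\<in>Basis \<times> Basis. ((a \<bullet> fst ij) * (a \<bullet> snd ij)) * ((x \<bullet> fst ij) * (x \<bullet> snd ij)))
          + (\<Sum>i\<in>Basis. (-2 * b * (a \<bullet> i)) * (t * (x \<bullet> i))) + b^2 + s"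
        by (simp add: sum_fun_apply fscale_def)
      have N: "(\<Sum>i\<in>Basis. (-2 * b * (a \<bullet> i)) * (t * (x \<bullet> i))) = - (\<Sum>i\<in>Basis. (2 * b * (a \<bullet> i)) * (t * (x \<bullet> i)))"
        by (simp add: sum_negf[symmetric])
      have P: "psi a b (x,t,s) = (a \<bullet> x)^2 - 2 * t * b * (a \<bullet> x) + b^2 + s" by (simp add: psi_def)
      show ?thesis unfolding p P R N sq l2 by simp
    qed
  qed
  have s1: "(\<Sum>ij\<in>Basis \<times> Basis. fscale ((a \<bullet> fst ij) * (a \<bullet> snd ij)) (?Q ij)) \<in> fv.span Wset"
  proof (intro fv.span_sum fv.span_scale fv.span_base)
    fix ij :: "'a \<times> 'a" assume "ij \<in> Basis \<times> Basis"
    hence "(\<lambda>(i,j). \<lambda>p::'a \<times> real \<times> real. (fst p \<bullet> i) * (fst p \<bullet> j)) ij \<in> (\<lambda>(i,j). \<lambda>p::'a \<times> real \<times> real. (fst p \<bullet> i) * (fst p \<bullet> j)) ` (Basis \<times> Basis)" by (rule imageI)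
    hence "?Q ij \<in> (\<lambda>(i,j). \<lambda>p::'a \<times> real \<times> real. (fst p \<bullet> i) * (fst p \<bullet> j)) ` (Basis \<times> Basis)" by (simp only: case_prod_beta)
    thus "?Q ij \<in> Wset" unfolding Wset_def by (rule UnI1[OF UnI1])
  qed
  have s2: "(\<Sum>i\<in>Basis. fscale (-2 * b * (a \<bullet> i)) (?L i)) \<in> fv.span Wset"
  proof (intro fv.span_sum fv.span_scale fv.span_base)
    fix i :: 'a assume "i \<in> Basis"
    hence "?L i \<in> (\<lambda>i. \<lambda>p::'a \<times> real \<times> real. fst (snd p) * (fst p \<bullet> i)) ` Basis" by (rule imageI)
    thus "?L i \<in> Wset" unfolding Wset_def by (rule UnI1[OF UnI2])
  qed
  have s3: "fscale (b^2) (\<lambda>p. 1) \<in> fv.span Wset"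
    by (intro fv.span_scale fv.span_base) (simp add: Wset_def)
  have s4: "fscale 1 (\<lambda>p. snd (snd p)) \<in> fv.span Wset"
    by (intro fv.span_scale fv.span_base) (simp add: Wset_def)
  show ?thesis unfolding eq by (intro fv.span_add s1 s2 s3 s4)
qed


lemma adj_iff:
  fixes a1 a2 :: "'a::euclidean_space"
  assumes "norm a1 = 1" "norm a2 = 1" "\<bar>b1\<bar> < 1"
  shows "(cball 0 1 \<inter> {x. a1 \<bullet> x = b1}) \<inter> (cball 0 1 \<inter> {x. a2 \<bullet> x = b2}) \<noteq> {}
     \<longleftrightarrow> psi a2 b2 (a1, b1, 0) \<le> 1 - b1^2"
proof -
  have "(cball 0 1 \<inter> {x. a1 \<bullet> x = b1}) \<inter> (cball 0 1 \<inter> {x. a2 \<bullet> x = b2}) \<noteq> {}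
     \<longleftrightarrow> (\<exists>x. norm x \<le> 1 \<and> a1 \<bullet> x = b1 \<and> a2 \<bullet> x = b2)" by auto
  also have "\<dots> \<longleftrightarrow> (a1 \<bullet> a2)^2 - 2*b1*b2*(a1 \<bullet> a2) + b1^2 + b2^2 \<le> 1"
    by (rule key) (use assms in auto)
  also have "\<dots> \<longleftrightarrow> psi a2 b2 (a1, b1, 0) \<le> 1 - b1^2"
    by (simp add: psi_def inner_commute algebra_simps)
  finally show ?thesis .
qed

theorem mainTheorem4:
  assumes "DIM('a::euclidean_space) \<ge> 2"
  shows "\<exists>(V :: nat set) (E :: nat \<Rightarrow> nat \<Rightarrow> bool).
           finite V \<and> (\<forall>u v. E u v \<longrightarrow> E v u) \<and> (\<forall>u. \<not> E u u) \<and>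
           (\<forall>u v. E u v \<longrightarrow> u \<in> V \<and> v \<in> V) \<and>
           \<not> is_sphere_graph TYPE('a) V E"
proof -
  define m where "m = DIM('a) * DIM('a) + DIM('a) + 3"
  define A where "A = {..<m}"
  define B where "B = (\<lambda>S. m + set_encode S) ` Pow A"
  define V where "V = A \<union> B"
  define E where "E u v \<longleftrightarrow> (u \<in> A \<and> v \<in> B \<and> u \<in> set_decode (v - m)) \<or> (v \<in> A \<and> u \<in> B \<and> v \<in> set_decode (u - m))" for u v
  have finA: "finite A" unfolding A_def by simp
  have AB: "u \<in> A \<Longrightarrow> v \<in> B \<Longrightarrow> u < v" for u v unfolding A_def B_def by auto
  have "finite V" unfolding V_def B_def using finA by simp
  moreover have "\<forall>u v. E u v \<longrightarrow> E v u" unfolding E_def by blast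
  moreover have "\<forall>u. \<not> E u u" unfolding E_def using AB by blast
  moreover have "\<forall>u v. E u v \<longrightarrow> u \<in> V \<and> v \<in> V" unfolding E_def V_def by blast
  moreover have "\<not> is_sphere_graph TYPE('a) V E"
  proof
    assume "is_sphere_graph TYPE('a) V E"
    then obtain f :: "nat \<Rightarrow> 'a set" where f: "f ` V \<subseteq> hyperplane_sections"
      "\<forall>u\<in>V. \<forall>v\<in>V. u \<noteq> v \<longrightarrow> (E u v \<longleftrightarrow> f u \<inter> f v \<noteq> {})"
      unfolding is_sphere_graph_def by blast
    have "\<forall>v\<in>V. \<exists>a b. norm a = 1 \<and> \<bar>b\<bar> < 1 \<and> f v = cball 0 1 \<inter> {x. a \<bullet> x = b}"
      using f(1) normalize_section by blast
    then obtain na nb where nab: "\<And>v. v \<in> V \<Longrightarrow> norm (na v :: 'a) = 1 \<and> \<bar>nb v\<bar> < 1 \<and> f v = cball 0 1 \<inter> {x. na v \<bullet> x = nb v}"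
      by metis
    have adj: "E u v \<longleftrightarrow> psi (na v) (nb v) (na u, nb u, 0) \<le> 1 - (nb u)^2"
      if "u \<in> V" "v \<in> V" "u \<noteq> v" for u v
    proof -
      have "E u v \<longleftrightarrow> f u \<inter> f v \<noteq> {}" using f(2) that by blast
      also have "\<dots> \<longleftrightarrow> psi (na v) (nb v) (na u, nb u, 0) \<le> 1 - (nb u)^2"
        using nab[OF that(1)] nab[OF that(2)] adj_iff[of "na u" "na v" "nb u" "nb v"] by simp
      finally show ?thesis .
    qed
    define \<psi> where "\<psi> v = psi (na v) (nb v)" for v
    have cardW: "card (Wset :: ('a \<times> real \<times> real \<Rightarrow> real) set) < card A"
      using Wset_card[where 'a='a] unfolding A_def m_def by simp
    have "\<psi> ` A \<subseteq> fv.span Wset" unfolding \<psi>_def using psi_span by blast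
    from dep_exists[OF finA Wset_finite cardW this]
    obtain l where l: "\<exists>v\<in>A. l v \<noteq> 0" "\<And>p. (\<Sum>v\<in>A. l v * \<psi> v p) = 0" by blast
    have sl: "(\<Sum>v\<in>A. l v) = 0"
    proof -
      have "(\<Sum>v\<in>A. l v * \<psi> v (0,0,1)) = (\<Sum>v\<in>A. l v * \<psi> v (0,0,0)) + (\<Sum>v\<in>A. l v)"
        by (simp add: \<psi>_def psi_def sum.distrib[symmetric] algebra_simps)
      thus ?thesis using l(2)[of "(0,0,1)"] l(2)[of "(0,0,0)"] by simp
    qed
    obtain v0 where v0: "v0 \<in> A" "l v0 < 0"
    proof (rule ccontr)
      assume "\<not> thesis"
      hence nn: "\<forall>v\<in>A. l v \<ge> 0" using that by force
      hence "\<forall>v\<in>A. l v = 0" using sum_nonneg_eq_0_iff[OF finA] sl by blast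
      thus False using l(1) by blast
    qed
    define I where "I = {v\<in>A. l v > 0}"
    define w where "w = m + set_encode I"
    have IA: "I \<subseteq> A" unfolding I_def by blast
    have wB: "w \<in> B" unfolding w_def B_def using IA by blast
    have wV: "w \<in> V" using wB unfolding V_def by blast
    have dec: "set_decode (w - m) = I" unfolding w_def using IA finA
      by (simp add: finite_subset set_encode_inverse)
    define g where "g v = \<psi> v (na w, nb w, 0) - (1 - (nb w)^2)" for v
    have Ev: "E v w \<longleftrightarrow> v \<in> I" if "v \<in> A" for v
      using that wB dec AB unfolding E_def by force
    have gI: "v \<in> A \<Longrightarrow> (g v \<le> 0 \<longleftrightarrow> v \<in> I)" for v
    proof -
      assume vA: "v \<in> A"
      have "v \<noteq> w" using AB[OF vA wB] by simp
      hence "E w v \<longleftrightarrow> g v \<le> 0" using adj[of w v] vA wV unfolding g_def \<psi>_def V_def by auto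
      moreover have "E w v \<longleftrightarrow> E v w" unfolding E_def by blast
      ultimately show ?thesis using Ev[OF vA] by simp
    qed
    have terms: "l v * g v \<le> 0" if "v \<in> A" for v
    proof (cases "l v > 0")
      case True
      hence "v \<in> I" using that unfolding I_def by blast
      hence "g v \<le> 0" using gI that by blast
      thus ?thesis using True by (simp add: mult_nonneg_nonpos)
    next
      case False
      hence "v \<notin> I" unfolding I_def by blast
      hence "g v > 0" using gI that by force
      thus ?thesis using False by (simp add: mult_nonpos_nonneg)
    qed
    have neg: "l v0 * g v0 < 0"
    proof -
      have "v0 \<notin> I" using v0 unfolding I_def by auto
      hence "g v0 > 0" using gI v0(1) by force
      thus ?thesis using v0(2) by (simp add: mult_neg_pos)
    qed
    have "(\<Sum>v\<in>A. l v * g v) = (\<Sum>v\<in>A. l v * \<psi> v (na w, nb w, 0)) - (\<Sum>v\<in>A. l v * (1 - (nb w)^2))"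
      unfolding g_def by (simp only: right_diff_distrib sum_subtractf)
    also have "(\<Sum>v\<in>A. l v * (1 - (nb w)^2)) = (\<Sum>v\<in>A. l v) * (1 - (nb w)^2)"
      by (simp only: sum_distrib_right)
    also have "(\<Sum>v\<in>A. l v * \<psi> v (na w, nb w, 0)) - (\<Sum>v\<in>A. l v) * (1 - (nb w)^2) = 0" using l(2) sl by simp
    finally have z: "(\<Sum>v\<in>A. l v * g v) = 0" .
    have r: "(\<Sum>v\<in>A. l v * g v) = l v0 * g v0 + (\<Sum>v\<in>A - {v0}. l v * g v)"
      using finA v0(1) by (simp add: sum.remove)
    have nn: "(\<Sum>v\<in>A - {v0}. l v * g v) \<le> 0" by (rule sum_nonpos) (use terms in auto)
    show False using z r nn neg by linarith
  qed
  ultimately show ?thesis by blast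
qed
end
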